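(* Let $\Bbbk$ be a field, let $\mathrm{Var}$ be a variety of $\Bbbk$-algebras with one binary product defined by a set of polylinear identities. Let $X$ be a set, $\dot X=\{\dot x\mid x\in X\}$ a disjoint copy of $X$, $F=\mathrm{Var}\langle X\cup\dot X\rangle$ the free $\mathrm{Var}$-algebra on $X\cup\dot X$, and $\varphi:F\to F$ the algebra homomorphism with $\varphi(x)=\varphi(\dot x)=x$ for $x\in X$. Equip $F$ with the operations $f\vdash g=\varphi(f)g$, $f\dashv g=f\varphi(g)$, $f\perp g=fg$, obtaining the system $F^{(3)}$. Then the subalgebra $V$ of $F^{(3)}$ generated by $\dot X$ (i.e. the smallest subspace containing $\dot X$ and closed under $\vdash,\dashv,\perp$) coincides with the subspace $W$ of $F$ spanned by all monomials $u$ with $\deg_{\dot X}u>0$.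
   Context: Monomials of $F$ are the images of nonassociative words (bracketed products) in the alphabet $X\cup\dot X$; since the defining identities of $\mathrm{Var}$ are polylinear, $F$ is graded by degree in each letter, and $\deg_{\dot X}u$ denotes the total number of occurrences of letters from $\dot X$ in the monomial $u$. *)

theory Defs
  imports Main
begin

datatype 'a mag = Gen 'a | Mul "'a mag" "'a mag"

fun letters :: "'a mag \<Rightarrow> 'a set" where
  "letters (Gen a) = {a}"
| "letters (Mul u v) = letters u \<union> letters v"

fun cnt :: "'a \<Rightarrow> 'a mag \<Rightarrow> nat" where
  "cnt b (Gen a) = (if a = b then 1 else 0)"
| "cnt b (Mul u v) = cnt b u + cnt b v"

text \<open>Alphabet X \<union> X-dot: Inl x stands for x, Inr x for x-dot.
  degdot w is the number of dotted letters in w.\<close>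
fun degdot :: "('x + 'x) mag \<Rightarrow> nat" where
  "degdot (Gen (Inl x)) = 0"
| "degdot (Gen (Inr x)) = 1"
| "degdot (Mul u v) = degdot u + degdot v"

definition alph :: "'x set \<Rightarrow> ('x + 'x) set" where
  "alph X = Inl ` X \<union> Inr ` X"

text \<open>Elements of the free nonassociative algebra: finitely supported
  coefficient functions on words.\<close>
definition supp :: "('a mag \<Rightarrow> 'k::zero) \<Rightarrow> 'a mag set" where
  "supp p = {w. p w \<noteq> 0}"

definition FA :: "'a set \<Rightarrow> ('a mag \<Rightarrow> 'k::zero) set" where
  "FA Al = {p. finite (supp p) \<and> (\<forall>w\<in>supp p. letters w \<subseteq> Al)}"

definition fzero :: "'a mag \<Rightarrow> 'k::zero" where "fzero = (\<lambda>_. 0)"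
definition fadd :: "('a mag \<Rightarrow> 'k::plus) \<Rightarrow> ('a mag \<Rightarrow> 'k) \<Rightarrow> 'a mag \<Rightarrow> 'k" where
  "fadd p q = (\<lambda>w. p w + q w)"
definition fsub :: "('a mag \<Rightarrow> 'k::minus) \<Rightarrow> ('a mag \<Rightarrow> 'k) \<Rightarrow> 'a mag \<Rightarrow> 'k" where
  "fsub p q = (\<lambda>w. p w - q w)"
definition fsmul :: "'k::times \<Rightarrow> ('a mag \<Rightarrow> 'k) \<Rightarrow> 'a mag \<Rightarrow> 'k" where
  "fsmul c p = (\<lambda>w. c * p w)"
definition mon :: "'a mag \<Rightarrow> 'a mag \<Rightarrow> 'k::{zero,one}" where
  "mon w = (\<lambda>u. if u = w then 1 else 0)"

definition fmul :: "('a mag \<Rightarrow> 'k::{zero,times}) \<Rightarrow> ('a mag \<Rightarrow> 'k) \<Rightarrow> 'a mag \<Rightarrow> 'k" where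
  "fmul p q = (\<lambda>w. case w of Gen _ \<Rightarrow> 0 | Mul u v \<Rightarrow> p u * q v)"

fun evalw :: "('v \<Rightarrow> 'a mag \<Rightarrow> 'k::comm_ring_1) \<Rightarrow> 'v mag \<Rightarrow> 'a mag \<Rightarrow> 'k" where
  "evalw \<sigma> (Gen v) = \<sigma> v"
| "evalw \<sigma> (Mul u w) = fmul (evalw \<sigma> u) (evalw \<sigma> w)"

definition eval :: "('v \<Rightarrow> 'a mag \<Rightarrow> 'k::comm_ring_1) \<Rightarrow> ('v mag \<Rightarrow> 'k) \<Rightarrow> 'a mag \<Rightarrow> 'k" where
  "eval \<sigma> p = (\<lambda>w. \<Sum>u\<in>supp p. p u * evalw \<sigma> u w)"

definition polylinear :: "(nat mag \<Rightarrow> 'k::zero) \<Rightarrow> bool" where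
  "polylinear p \<longleftrightarrow> finite (supp p) \<and>
     (\<exists>S. \<forall>w\<in>supp p. \<forall>v. cnt v w = (if v \<in> S then 1 else 0))"

text \<open>The verbal (T-)ideal of the free nonassociative algebra on Al
  determined by the identities Ids: the ideal generated by all values of
  the identities.\<close>
inductive_set Tid :: "(nat mag \<Rightarrow> 'k::field) set \<Rightarrow> 'a set \<Rightarrow> ('a mag \<Rightarrow> 'k) set"
  for Ids :: "(nat mag \<Rightarrow> 'k::field) set" and Al :: "'a set" where
  val: "p \<in> Ids \<Longrightarrow> (\<forall>v. \<sigma> v \<in> FA Al) \<Longrightarrow> eval \<sigma> p \<in> Tid Ids Al"
| zero: "fzero \<in> Tid Ids Al"
| add: "f \<in> Tid Ids Al \<Longrightarrow> g \<in> Tid Ids Al \<Longrightarrow> fadd f g \<in> Tid Ids Al"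
| smul: "f \<in> Tid Ids Al \<Longrightarrow> fsmul c f \<in> Tid Ids Al"
| multl: "f \<in> Tid Ids Al \<Longrightarrow> g \<in> FA Al \<Longrightarrow> fmul g f \<in> Tid Ids Al"
| multr: "f \<in> Tid Ids Al \<Longrightarrow> g \<in> FA Al \<Longrightarrow> fmul f g \<in> Tid Ids Al"

text \<open>Elements of F = Var<X \<union> X-dot> are cosets modulo the T-ideal.\<close>
definition cls :: "(nat mag \<Rightarrow> 'k::field) set \<Rightarrow> 'x set \<Rightarrow> (('x + 'x) mag \<Rightarrow> 'k)
     \<Rightarrow> (('x + 'x) mag \<Rightarrow> 'k) set" where
  "cls Ids X f = {g \<in> FA (alph X). fsub g f \<in> Tid Ids (alph X)}"

definition undot :: "'x + 'x \<Rightarrow> 'x" where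
  "undot a = (case a of Inl x \<Rightarrow> x | Inr x \<Rightarrow> x)"

definition phi :: "(('x + 'x) mag \<Rightarrow> 'k::comm_ring_1) \<Rightarrow> ('x + 'x) mag \<Rightarrow> 'k" where
  "phi f = eval (\<lambda>a. mon (Gen (Inl (undot a)))) f"

text \<open>The subalgebra V of F^(3) generated by X-dot: smallest subspace of F
  containing the dotted generators and closed under the three operations,
  operations on F computed on representatives.\<close>
inductive_set Vsub :: "(nat mag \<Rightarrow> 'k::field) set \<Rightarrow> 'x set \<Rightarrow> (('x + 'x) mag \<Rightarrow> 'k) set set"
  for Ids :: "(nat mag \<Rightarrow> 'k::field) set" and X :: "'x set" where
  gen: "x \<in> X \<Longrightarrow> cls Ids X (mon (Gen (Inr x))) \<in> Vsub Ids X"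
| zero: "cls Ids X fzero \<in> Vsub Ids X"
| add: "C \<in> Vsub Ids X \<Longrightarrow> D \<in> Vsub Ids X \<Longrightarrow> f \<in> C \<Longrightarrow> g \<in> D
          \<Longrightarrow> cls Ids X (fadd f g) \<in> Vsub Ids X"
| smul: "C \<in> Vsub Ids X \<Longrightarrow> f \<in> C \<Longrightarrow> cls Ids X (fsmul c f) \<in> Vsub Ids X"
| vdash: "C \<in> Vsub Ids X \<Longrightarrow> D \<in> Vsub Ids X \<Longrightarrow> f \<in> C \<Longrightarrow> g \<in> D
          \<Longrightarrow> cls Ids X (fmul (phi f) g) \<in> Vsub Ids X"
| dashv: "C \<in> Vsub Ids X \<Longrightarrow> D \<in> Vsub Ids X \<Longrightarrow> f \<in> C \<Longrightarrow> g \<in> D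
          \<Longrightarrow> cls Ids X (fmul f (phi g)) \<in> Vsub Ids X"
| perp: "C \<in> Vsub Ids X \<Longrightarrow> D \<in> Vsub Ids X \<Longrightarrow> f \<in> C \<Longrightarrow> g \<in> D
          \<Longrightarrow> cls Ids X (fmul f g) \<in> Vsub Ids X"

definition Wsub :: "(nat mag \<Rightarrow> 'k::field) set \<Rightarrow> 'x set \<Rightarrow> (('x + 'x) mag \<Rightarrow> 'k) set set" where
  "Wsub Ids X = {cls Ids X f | f. f \<in> FA (alph X) \<and> (\<forall>w\<in>supp f. 0 < degdot w)}"

end

theory Submission
  imports Defs
begin

lemma supp_fmul: "supp (fmul p q :: _ \<Rightarrow> 'k::mult_zero) \<subseteq> (\<lambda>(a,b). Mul a b) ` (supp p \<times> supp q)"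
proof
  fix w assume "w \<in> supp (fmul p q)"
  then show "w \<in> (\<lambda>(a,b). Mul a b) ` (supp p \<times> supp q)"
    by (cases w) (auto simp: supp_def fmul_def image_iff)
qed

lemma fin_fmul: "finite (supp (p :: _ \<Rightarrow> 'k::mult_zero)) \<Longrightarrow> finite (supp q) \<Longrightarrow> finite (supp (fmul p q))"
  by (rule finite_subset[OF supp_fmul]) (auto intro: finite_imageI)

lemma FA_fmul: "(p :: _ \<Rightarrow> 'k::mult_zero) \<in> FA Al \<Longrightarrow> q \<in> FA Al \<Longrightarrow> fmul p q \<in> FA Al"
proof -
  assume a: "p \<in> FA Al" "q \<in> FA Al"
  have "finite (supp (fmul p q))" using a fin_fmul unfolding FA_def by blast
  moreover have "\<forall>w\<in>supp (fmul p q). letters w \<subseteq> Al"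
    using supp_fmul[of p q] a unfolding FA_def by fastforce
  ultimately show ?thesis unfolding FA_def by blast
qed

lemma evalw_fin: "(\<forall>v. finite (supp (\<sigma> v))) \<Longrightarrow> finite (supp (evalw \<sigma> u))"
  by (induction u) (auto intro: fin_fmul)

lemma evalw_FA: "(\<forall>v\<in>letters u. \<sigma> v \<in> FA Al) \<Longrightarrow> evalw \<sigma> u \<in> FA Al"
  by (induction u) (auto intro: FA_fmul)

lemma eval_superset:
  assumes "finite S" "supp p \<subseteq> S"
  shows "eval \<sigma> p w = (\<Sum>u\<in>S. p u * evalw \<sigma> u w)"
  unfolding eval_def
  by (rule sum.mono_neutral_left) (use assms in \<open>auto simp: supp_def\<close>)

lemma supp_eval:
  assumes "finite (supp p)"
  shows "supp (eval \<sigma> p) \<subseteq> (\<Union>u\<in>supp p. supp (evalw \<sigma> u))"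
proof
  fix w assume w: "w \<in> supp (eval \<sigma> p)"
  show "w \<in> (\<Union>u\<in>supp p. supp (evalw \<sigma> u))"
  proof (rule ccontr)
    assume "w \<notin> (\<Union>u\<in>supp p. supp (evalw \<sigma> u))"
    then have "\<forall>u\<in>supp p. evalw \<sigma> u w = 0" by (auto simp: supp_def)
    then have "eval \<sigma> p w = 0" unfolding eval_def by simp
    with w show False by (simp add: supp_def)
  qed
qed

lemma eval_inf: "\<not> finite (supp p) \<Longrightarrow> eval \<sigma> p = fzero"
  unfolding eval_def fzero_def by auto

lemma eval_FA:
  assumes "\<forall>u\<in>supp p. evalw \<sigma> u \<in> FA Al"
  shows "eval \<sigma> p \<in> FA Al"
proof (cases "finite (supp p)")
  case False
  then show ?thesis by (simp add: eval_inf FA_def fzero_def supp_def)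
next
  case True
  have "finite (\<Union>u\<in>supp p. supp (evalw \<sigma> u))" using True assms by (auto simp: FA_def)
  moreover have "\<forall>w\<in>(\<Union>u\<in>supp p. supp (evalw \<sigma> u)). letters w \<subseteq> Al"
    using assms by (auto simp: FA_def)
  ultimately show ?thesis using supp_eval[OF True, of \<sigma>] unfolding FA_def
    using finite_subset by blast
qed

lemma eval_fmul:
  fixes p q :: "'a mag \<Rightarrow> 'k::comm_ring_1"
  assumes fp: "finite (supp p)" and fq: "finite (supp q)"
  shows "eval \<tau> (fmul p q) = fmul (eval \<tau> p) (eval \<tau> q)"
proof
  fix w
  let ?M = "\<lambda>(a,b). Mul a b"
  let ?S = "supp p \<times> supp q"
  have "eval \<tau> (fmul p q) w = (\<Sum>x\<in>?M ` ?S. fmul p q x * evalw \<tau> x w)"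
    by (rule eval_superset) (use fp fq supp_fmul in auto)
  also have "\<dots> = (\<Sum>x\<in>?S. fmul p q (?M x) * evalw \<tau> (?M x) w)"
    by (subst sum.reindex) (auto simp: inj_on_def)
  also have "\<dots> = (\<Sum>x\<in>?S. p (fst x) * q (snd x) * fmul (evalw \<tau> (fst x)) (evalw \<tau> (snd x)) w)"
    by (rule sum.cong) (auto simp: fmul_def split: mag.splits)
  also have "\<dots> = fmul (eval \<tau> p) (eval \<tau> q) w"
  proof (cases w)
    case (Gen c)
    then show ?thesis by (simp add: fmul_def)
  next
    case (Mul c d)
    have "fmul (eval \<tau> p) (eval \<tau> q) w = (\<Sum>a\<in>supp p. p a * evalw \<tau> a c) * (\<Sum>b\<in>supp q. q b * evalw \<tau> b d)"
      by (simp add: Mul fmul_def eval_def)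
    also have "\<dots> = (\<Sum>a\<in>supp p. \<Sum>b\<in>supp q. (p a * evalw \<tau> a c) * (q b * evalw \<tau> b d))"
      by (rule sum_product)
    also have "\<dots> = (\<Sum>x\<in>?S. (p (fst x) * evalw \<tau> (fst x) c) * (q (snd x) * evalw \<tau> (snd x) d))"
      by (subst sum.cartesian_product) (simp add: case_prod_beta)
    finally show ?thesis by (simp add: Mul fmul_def algebra_simps)
  qed
  finally show "eval \<tau> (fmul p q) w = fmul (eval \<tau> p) (eval \<tau> q) w" .
qed

lemma eval_evalw:
  fixes \<sigma> :: "'v \<Rightarrow> 'a mag \<Rightarrow> 'k::comm_ring_1"
  assumes "\<forall>v. finite (supp (\<sigma> v))"
  shows "eval \<tau> (evalw \<sigma> u) = evalw (\<lambda>v. eval \<tau> (\<sigma> v)) u"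
  by (induction u) (auto simp: eval_fmul evalw_fin assms)

lemma eval_eval:
  fixes \<sigma> :: "'v \<Rightarrow> 'a mag \<Rightarrow> 'k::comm_ring_1"
  assumes fp: "finite (supp p)" and fs: "\<forall>v. finite (supp (\<sigma> v))"
  shows "eval \<tau> (eval \<sigma> p) = eval (\<lambda>v. eval \<tau> (\<sigma> v)) p"
proof
  fix w
  let ?T = "\<Union>u\<in>supp p. supp (evalw \<sigma> u)"
  have fT: "finite ?T" using fp evalw_fin[OF fs] by auto
  have "eval \<tau> (eval \<sigma> p) w = (\<Sum>v\<in>?T. eval \<sigma> p v * evalw \<tau> v w)"
    by (rule eval_superset[OF fT supp_eval[OF fp]])
  also have "\<dots> = (\<Sum>v\<in>?T. \<Sum>u\<in>supp p. p u * (evalw \<sigma> u v * evalw \<tau> v w))"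
    by (simp add: eval_def sum_distrib_right mult.assoc)
  also have "\<dots> = (\<Sum>u\<in>supp p. p u * (\<Sum>v\<in>?T. evalw \<sigma> u v * evalw \<tau> v w))"
    by (subst sum.swap) (simp add: sum_distrib_left)
  also have "\<dots> = (\<Sum>u\<in>supp p. p u * eval \<tau> (evalw \<sigma> u) w)"
    by (rule sum.cong[OF refl], subst eval_superset[OF fT]) auto
  also have "\<dots> = eval (\<lambda>v. eval \<tau> (\<sigma> v)) p w"
    unfolding eval_def[of _ p] by (rule sum.cong[OF refl]) (simp add: eval_evalw[OF fs])
  finally show "eval \<tau> (eval \<sigma> p) w = eval (\<lambda>v. eval \<tau> (\<sigma> v)) p w" .
qed

lemma eval_fadd:
  assumes "finite (supp p)" "finite (supp q)"
  shows "eval \<sigma> (fadd p q) = fadd (eval \<sigma> p) (eval \<sigma> q)"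
proof
  fix w
  let ?S = "supp p \<union> supp q"
  have s: "supp (fadd p q) \<subseteq> ?S" by (auto simp: supp_def fadd_def)
  show "eval \<sigma> (fadd p q) w = fadd (eval \<sigma> p) (eval \<sigma> q) w"
    unfolding fadd_def
    apply (subst (1 2 3) eval_superset[where S="?S"])
    using assms s by (auto simp: fadd_def sum.distrib distrib_right)
qed

lemma eval_fsub:
  assumes "finite (supp p)" "finite (supp q)"
  shows "eval \<sigma> (fsub p q) = fsub (eval \<sigma> p) (eval \<sigma> q)"
proof
  fix w
  let ?S = "supp p \<union> supp q"
  have s: "supp (fsub p q) \<subseteq> ?S" by (auto simp: supp_def fsub_def)
  show "eval \<sigma> (fsub p q) w = fsub (eval \<sigma> p) (eval \<sigma> q) w"
    unfolding fsub_def
    apply (subst (1 2 3) eval_superset[where S="?S"])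
    using assms s by (auto simp: fsub_def sum_subtractf left_diff_distrib)
qed

lemma eval_fsmul:
  assumes "finite (supp p)"
  shows "eval \<sigma> (fsmul c p) = fsmul c (eval \<sigma> p)"
proof
  fix w
  have s: "supp (fsmul c p) \<subseteq> supp p" by (auto simp: supp_def fsmul_def)
  show "eval \<sigma> (fsmul c p) w = fsmul c (eval \<sigma> p) w"
    unfolding fsmul_def
    apply (subst (1 2) eval_superset[where S="supp p"])
    using assms s by (auto simp: fsmul_def sum_distrib_left mult.assoc)
qed

lemma eval_fzero: "eval \<sigma> fzero = fzero"
  by (simp add: eval_def fzero_def supp_def)


lemma mon_supp: "supp (mon w :: _ \<Rightarrow> 'k::zero_neq_one) = {w}"
  by (auto simp: supp_def mon_def)

lemma mon_FA: "letters w \<subseteq> Al \<Longrightarrow> (mon w :: _ \<Rightarrow> 'k::zero_neq_one) \<in> FA Al"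
  by (simp add: FA_def mon_supp)

lemma fmul_mon: "fmul (mon u) (mon v) = (mon (Mul u v) :: _ \<Rightarrow> 'k::{mult_zero,monoid_mult})"
  by (rule ext, simp add: fmul_def mon_def split: mag.splits)

lemma Tid_FA: "f \<in> Tid Ids Al \<Longrightarrow> f \<in> FA Al"
proof (induction rule: Tid.induct)
  case (val p \<sigma>)
  then show ?case by (intro eval_FA ballI evalw_FA) auto
next
  case zero
  then show ?case by (simp add: FA_def fzero_def supp_def)
next
  case (add f g)
  have "supp (fadd f g) \<subseteq> supp f \<union> supp g" by (auto simp: supp_def fadd_def)
  with add show ?case unfolding FA_def by (auto dest: finite_subset)
next
  case (smul f c)
  have "supp (fsmul c f) \<subseteq> supp f" by (auto simp: supp_def fsmul_def)
  with smul show ?case unfolding FA_def by (auto dest: finite_subset)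
next
  case (multl f g)
  then show ?case by (simp add: FA_fmul)
next
  case (multr f g)
  then show ?case by (simp add: FA_fmul)
qed

lemma FA_fin: "f \<in> FA Al \<Longrightarrow> finite (supp f)"
  by (simp add: FA_def)

lemma phi_FA:
  assumes "(f :: _ \<Rightarrow> 'k::comm_ring_1) \<in> FA (alph X)"
  shows "phi f \<in> FA (alph X)"
  unfolding phi_def
proof (intro eval_FA ballI evalw_FA)
  fix u v assume u: "u \<in> supp f" and v: "v \<in> letters u"
  have "v \<in> alph X" using assms u v by (auto simp: FA_def)
  then have "Inl (undot v) \<in> alph X" by (auto simp: alph_def undot_def)
  then show "(mon (Gen (Inl (undot v))) :: _ \<Rightarrow> 'k) \<in> FA (alph X)"
    by (intro mon_FA) simp
qed

lemma phi_fin: "finite (supp f) \<Longrightarrow> finite (supp (phi f))"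
  unfolding phi_def
  by (rule finite_subset[OF supp_eval]) (auto intro!: evalw_fin simp: mon_supp)

lemma phi_Tid:
  fixes Ids :: "(nat mag \<Rightarrow> 'k::field) set"
  shows "f \<in> Tid Ids (alph X) \<Longrightarrow> phi f \<in> Tid Ids (alph X)"
proof (induction rule: Tid.induct)
  case (val p \<sigma>)
  show ?case
  proof (cases "finite (supp p)")
    case True
    have "phi (eval \<sigma> p) = eval (\<lambda>v. phi (\<sigma> v)) p"
      unfolding phi_def by (rule eval_eval[OF True]) (use val in \<open>auto simp: FA_def\<close>)
    also have "\<dots> \<in> Tid Ids (alph X)"
      by (rule Tid.val) (use val phi_FA in auto)
    finally show ?thesis .
  next
    case False
    then show ?thesis by (simp add: eval_inf phi_def eval_fzero Tid.zero)
  qed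
next
  case zero
  then show ?case by (simp add: phi_def eval_fzero Tid.zero)
next
  case (add f g)
  then show ?case unfolding phi_def
    by (subst eval_fadd) (auto intro: Tid.add FA_fin Tid_FA simp: phi_def[symmetric])
next
  case (smul f c)
  then show ?case unfolding phi_def
    by (subst eval_fsmul) (auto intro: Tid.smul FA_fin Tid_FA simp: phi_def[symmetric])
next
  case (multl f g)
  then show ?case unfolding phi_def
    by (subst eval_fmul) (auto intro: Tid.multl FA_fin Tid_FA phi_FA simp: phi_def[symmetric])
next
  case (multr f g)
  then show ?case unfolding phi_def
    by (subst eval_fmul) (auto intro: Tid.multr FA_fin Tid_FA phi_FA simp: phi_def[symmetric])
qed


lemma fsub_trans: "fsub g b = fadd (fsub g a) (fsub a (b :: _ \<Rightarrow> 'k::ab_group_add))"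
  by (rule ext) (simp add: fsub_def fadd_def)
lemma fsub_sym: "fsub b a = fsmul (-1) (fsub a (b :: _ \<Rightarrow> 'k::comm_ring_1))"
  by (rule ext) (simp add: fsub_def fsmul_def)
lemma fsub_fadd: "fsub (fadd f g) (fadd h k) = fadd (fsub f h) (fsub g (k :: _ \<Rightarrow> 'k::comm_ring_1))"
  by (rule ext) (simp add: fsub_def fadd_def)
lemma fsub_fsmul: "fsub (fsmul c f) (fsmul c h) = fsmul c (fsub f (h :: _ \<Rightarrow> 'k::comm_ring_1))"
  by (rule ext) (simp add: fsub_def fsmul_def algebra_simps)
lemma fsub_fmul: "fsub (fmul A B) (fmul C D) = fadd (fmul (fsub A C) B) (fmul C (fsub B (D :: _ \<Rightarrow> 'k::comm_ring_1)))"
  by (rule ext) (simp add: fsub_def fadd_def fmul_def algebra_simps split: mag.splits)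

lemma fsub_self: "fsub f f = (fzero :: _ \<Rightarrow> 'k::comm_ring_1)"
  by (rule ext) (simp add: fsub_def fzero_def)

lemma cls_eq:
  fixes Ids :: "(nat mag \<Rightarrow> 'k::field) set"
  assumes "fsub a b \<in> Tid Ids (alph X)"
  shows "cls Ids X a = cls Ids X b"
proof -
  have ba: "fsub b a \<in> Tid Ids (alph X)"
    using assms by (subst fsub_sym) (rule Tid.smul)
  show ?thesis unfolding cls_def
  proof (intro Collect_cong conj_cong refl iffI)
    fix g assume "fsub g a \<in> Tid Ids (alph X)"
    then show "fsub g b \<in> Tid Ids (alph X)"
      by (subst fsub_trans[of _ _ a]) (rule Tid.add[OF _ assms])
  next
    fix g assume "fsub g b \<in> Tid Ids (alph X)"
    then show "fsub g a \<in> Tid Ids (alph X)"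
      by (subst fsub_trans[of _ _ b]) (rule Tid.add[OF _ ba])
  qed
qed

lemma cls_refl:
  fixes Ids :: "(nat mag \<Rightarrow> 'k::field) set"
  shows "f \<in> FA (alph X) \<Longrightarrow> f \<in> cls Ids X f"
  unfolding cls_def by (simp add: fsub_self Tid.zero)

lemma cls_mem: "f \<in> cls Ids X h \<Longrightarrow> f \<in> FA (alph X) \<and> fsub f h \<in> Tid Ids (alph X)"
  unfolding cls_def by simp

definition Wf :: "'x set \<Rightarrow> (('x + 'x) mag \<Rightarrow> 'k::field) \<Rightarrow> bool" where
  "Wf X h \<longleftrightarrow> h \<in> FA (alph X) \<and> (\<forall>w\<in>supp h. 0 < degdot w)"

lemma Wf_zero: "Wf X fzero"
  by (simp add: Wf_def FA_def fzero_def supp_def)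

lemma Wf_gen: "x \<in> X \<Longrightarrow> Wf X (mon (Gen (Inr x)))"
  by (simp add: Wf_def mon_FA mon_supp alph_def)

lemma Wf_add: "Wf X f \<Longrightarrow> Wf X g \<Longrightarrow> Wf X (fadd f g)"
proof -
  assume a: "Wf X f" "Wf X g"
  have s: "supp (fadd f g) \<subseteq> supp f \<union> supp g" by (auto simp: supp_def fadd_def)
  have f1: "finite (supp f)" "finite (supp g)" using a unfolding Wf_def FA_def by auto
  have "finite (supp (fadd f g))" using f1 s by (rule_tac finite_subset[OF s]) simp
  moreover have "\<forall>w\<in>supp f \<union> supp g. letters w \<subseteq> alph X \<and> 0 < degdot w"
    using a unfolding Wf_def FA_def by auto
  ultimately show ?thesis using s unfolding Wf_def FA_def by auto
qed

lemma Wf_smul: "Wf X f \<Longrightarrow> Wf X (fsmul c f)"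
proof -
  assume a: "Wf X f"
  have s: "supp (fsmul c f) \<subseteq> supp f" by (auto simp: supp_def fsmul_def)
  have f1: "finite (supp f)" using a unfolding Wf_def FA_def by auto
  have "finite (supp (fsmul c f))" using f1 s by (rule_tac finite_subset[OF s]) simp
  moreover have "\<forall>w\<in>supp f. letters w \<subseteq> alph X \<and> 0 < degdot w"
    using a unfolding Wf_def FA_def by auto
  ultimately show ?thesis using s unfolding Wf_def FA_def by auto
qed

lemma Wf_mull: "a \<in> FA (alph X) \<Longrightarrow> Wf X g \<Longrightarrow> Wf X (fmul a g)"
  using supp_fmul[of a g] unfolding Wf_def by (auto intro: FA_fmul)

lemma Wf_mulr: "Wf X f \<Longrightarrow> a \<in> FA (alph X) \<Longrightarrow> Wf X (fmul f a)"
  using supp_fmul[of f a] unfolding Wf_def by (auto intro: FA_fmul)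

lemma V_W:
  fixes Ids :: "(nat mag \<Rightarrow> 'k::field) set"
  shows "C \<in> Vsub Ids X \<Longrightarrow> \<exists>h. Wf X h \<and> C = cls Ids X h"
proof (induction rule: Vsub.induct)
  case (gen x)
  then show ?case by (intro exI[of _ "mon (Gen (Inr x))"] conjI Wf_gen refl)
next
  case zero
  show ?case by (intro exI[of _ fzero] conjI Wf_zero refl)
next
  case (add C D f g)
  obtain h1 where h1: "Wf X h1" "C = cls Ids X h1" using add.IH(1) by blast
  obtain h2 where h2: "Wf X h2" "D = cls Ids X h2" using add.IH(2) by blast
  note h = h1 h2
  have m1: "fsub f h1 \<in> Tid Ids (alph X)" using cls_mem \<open>f \<in> C\<close> h(2) by metis
  have m2: "fsub g h2 \<in> Tid Ids (alph X)" using cls_mem \<open>g \<in> D\<close> h(4) by metis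
  have "cls Ids X (fadd f g) = cls Ids X (fadd h1 h2)"
    apply (rule cls_eq) unfolding fsub_fadd by (intro Tid.add m1 m2)
  then show ?case using Wf_add[OF h(1) h(3)] by (intro exI conjI) (assumption+)
next
  case (smul C f c)
  obtain h1 where h: "Wf X h1" "C = cls Ids X h1" using smul.IH by blast
  have m1: "fsub f h1 \<in> Tid Ids (alph X)" using cls_mem \<open>f \<in> C\<close> h(2) by metis
  have "cls Ids X (fsmul c f) = cls Ids X (fsmul c h1)"
    apply (rule cls_eq) unfolding fsub_fsmul by (intro Tid.smul m1)
  then show ?case using Wf_smul[OF h(1)] by (intro exI conjI) (assumption+)
next
  case (vdash C D f g)
  obtain h1 where h1: "Wf X h1" "C = cls Ids X h1" using vdash.IH(1) by blast
  obtain h2 where h2: "Wf X h2" "D = cls Ids X h2" using vdash.IH(2) by blast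
  note h = h1 h2
  have m1: "f \<in> FA (alph X) \<and> fsub f h1 \<in> Tid Ids (alph X)" using cls_mem \<open>f \<in> C\<close> h(2) by metis
  have m2: "g \<in> FA (alph X) \<and> fsub g h2 \<in> Tid Ids (alph X)" using cls_mem \<open>g \<in> D\<close> h(4) by metis
  have h1F: "h1 \<in> FA (alph X)" using h(1) by (simp add: Wf_def)
  have ps: "fsub (phi f) (phi h1) = phi (fsub f h1)"
    unfolding phi_def by (rule eval_fsub[symmetric]) (use m1 h1F FA_fin in auto)
  have "cls Ids X (fmul (phi f) g) = cls Ids X (fmul (phi h1) h2)"
    apply (rule cls_eq) unfolding fsub_fmul ps
    by (rule Tid.add[OF Tid.multr[OF phi_Tid[OF m1[THEN conjunct2]] m2[THEN conjunct1]]
          Tid.multl[OF m2[THEN conjunct2] phi_FA[OF h1F]]])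
  then show ?case using Wf_mull[OF phi_FA[OF h1F] h(3)] by (intro exI conjI) (assumption+)
next
  case (dashv C D f g)
  obtain h1 where h1: "Wf X h1" "C = cls Ids X h1" using dashv.IH(1) by blast
  obtain h2 where h2: "Wf X h2" "D = cls Ids X h2" using dashv.IH(2) by blast
  note h = h1 h2
  have m1: "f \<in> FA (alph X) \<and> fsub f h1 \<in> Tid Ids (alph X)" using cls_mem \<open>f \<in> C\<close> h(2) by metis
  have m2: "g \<in> FA (alph X) \<and> fsub g h2 \<in> Tid Ids (alph X)" using cls_mem \<open>g \<in> D\<close> h(4) by metis
  have h2F: "h2 \<in> FA (alph X)" using h(3) by (simp add: Wf_def)
  have ps: "fsub (phi g) (phi h2) = phi (fsub g h2)"
    unfolding phi_def by (rule eval_fsub[symmetric]) (use m2 h2F FA_fin in auto)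
  have "cls Ids X (fmul f (phi g)) = cls Ids X (fmul h1 (phi h2))"
    apply (rule cls_eq) unfolding fsub_fmul ps
    by (rule Tid.add[OF Tid.multr[OF m1[THEN conjunct2] phi_FA[OF m2[THEN conjunct1]]]
          Tid.multl[OF phi_Tid[OF m2[THEN conjunct2]] h(1)[unfolded Wf_def, THEN conjunct1]]])
  then show ?case using Wf_mulr[OF h(1) phi_FA[OF h2F]] by (intro exI conjI) (assumption+)
next
  case (perp C D f g)
  obtain h1 where h1: "Wf X h1" "C = cls Ids X h1" using perp.IH(1) by blast
  obtain h2 where h2: "Wf X h2" "D = cls Ids X h2" using perp.IH(2) by blast
  note h = h1 h2
  have m1: "f \<in> FA (alph X) \<and> fsub f h1 \<in> Tid Ids (alph X)" using cls_mem \<open>f \<in> C\<close> h(2) by metis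
  have m2: "g \<in> FA (alph X) \<and> fsub g h2 \<in> Tid Ids (alph X)" using cls_mem \<open>g \<in> D\<close> h(4) by metis
  have h1F: "h1 \<in> FA (alph X)" using h(1) by (simp add: Wf_def)
  have "cls Ids X (fmul f g) = cls Ids X (fmul h1 h2)"
    apply (rule cls_eq) unfolding fsub_fmul
    by (rule Tid.add[OF Tid.multr[OF m1[THEN conjunct2] m2[THEN conjunct1]]
          Tid.multl[OF m2[THEN conjunct2] h1F]])
  then show ?case using Wf_mull[OF h1F h(3)] by (intro exI conjI) (assumption+)
qed


lemma map_letters: "letters (map_mag f u) = f ` letters u"
  by (induction u) auto

lemma size_map_mag: "size (map_mag f u) = size u"
  by (induction u) auto

lemma degdot_dot: "0 < degdot (map_mag (\<lambda>a. Inr (g a)) u)"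
  by (induction u) auto

lemma map_undot0: "degdot u = 0 \<Longrightarrow> map_mag (\<lambda>a. Inl (undot a)) u = u"
proof (induction u)
  case (Gen a)
  then show ?case by (cases a) (auto simp: undot_def)
next
  case (Mul u v)
  then show ?case by simp
qed

lemma evalw_tau:
  "evalw (\<lambda>a. mon (Gen (Inl (undot a)))) u = (mon (map_mag (\<lambda>a. Inl (undot a)) u) :: _ \<Rightarrow> 'k::comm_ring_1)"
  by (induction u) (auto simp: fmul_mon)

lemma phi_mon: "phi (mon u) = (mon (map_mag (\<lambda>a. Inl (undot a)) u) :: _ \<Rightarrow> 'k::comm_ring_1)"
proof -
  have m: "(mon u :: _ \<Rightarrow> 'k) u = 1" by (simp add: mon_def)
  have "phi (mon u) = (evalw (\<lambda>a. mon (Gen (Inl (undot a)))) u :: _ \<Rightarrow> 'k)"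
    unfolding phi_def eval_def mon_supp by (rule ext) (simp add: m)
  then show ?thesis by (simp add: evalw_tau)
qed

lemma mon_V:
  fixes Ids :: "(nat mag \<Rightarrow> 'k::field) set" and X :: "'x set"
  shows "letters w \<subseteq> alph X \<Longrightarrow> 0 < degdot w \<Longrightarrow> cls Ids X (mon w) \<in> Vsub Ids X"
proof (induction w rule: measure_induct_rule[of size])
  case (less w)
  show ?case
  proof (cases w)
    case (Gen a)
    then obtain x where ax: "a = Inr x" using less.prems by (cases a) auto
    have "x \<in> X" using less.prems unfolding Gen ax by (auto simp: alph_def)
    from Vsub.gen[OF this] show ?thesis by (simp add: Gen ax)
  next
    case (Mul u v)
    have IH: "cls Ids X (mon w') \<in> Vsub Ids X \<and> (mon w' :: _ \<Rightarrow> 'k) \<in> cls Ids X (mon w')"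
      if "size w' < size w" "letters w' \<subseteq> alph X" "0 < degdot w'" for w'
      using less.IH[OF that(1) that(2) that(3)] cls_refl[OF mon_FA[OF that(2)]] by (intro conjI)
    have lu: "letters u \<subseteq> alph X" and lv: "letters v \<subseteq> alph X" using less.prems Mul by auto
    have su: "size u < size w" and sv: "size v < size w" using Mul by auto
    define du :: "('x + 'x) mag" where "du = map_mag (\<lambda>a. Inr (undot a)) u"
    define dv :: "('x + 'x) mag" where "dv = map_mag (\<lambda>a. Inr (undot a)) v"
    have ldu: "letters du \<subseteq> alph X" using lu unfolding du_def map_letters
      by (auto simp: alph_def undot_def)
    have ldv: "letters dv \<subseteq> alph X" using lv unfolding dv_def map_letters
      by (auto simp: alph_def undot_def)
    have pdu: "phi (mon du) = (mon u :: _ \<Rightarrow> 'k)" if "degdot u = 0"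
      unfolding phi_mon du_def using map_undot0[OF that] by (simp add: mag.map_comp o_def undot_def)
    have pdv: "phi (mon dv) = (mon v :: _ \<Rightarrow> 'k)" if "degdot v = 0"
      unfolding phi_mon dv_def using map_undot0[OF that] by (simp add: mag.map_comp o_def undot_def)
    have Du: "cls Ids X (mon du) \<in> Vsub Ids X \<and> (mon du :: _ \<Rightarrow> 'k) \<in> cls Ids X (mon du)"
      by (rule IH) (use ldu su in \<open>auto simp: du_def size_map_mag degdot_dot\<close>)
    have Dv: "cls Ids X (mon dv) \<in> Vsub Ids X \<and> (mon dv :: _ \<Rightarrow> 'k) \<in> cls Ids X (mon dv)"
      by (rule IH) (use ldv sv in \<open>auto simp: dv_def size_map_mag degdot_dot\<close>)
    consider "0 < degdot u" "0 < degdot v" | "degdot u = 0" "0 < degdot v" | "degdot v = 0" "0 < degdot u"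
      using less.prems Mul by fastforce
    then show ?thesis
    proof cases
      case 1
      have A: "cls Ids X (mon u) \<in> Vsub Ids X \<and> (mon u :: _ \<Rightarrow> 'k) \<in> cls Ids X (mon u)"
        by (rule IH[OF su lu 1(1)])
      have B: "cls Ids X (mon v) \<in> Vsub Ids X \<and> (mon v :: _ \<Rightarrow> 'k) \<in> cls Ids X (mon v)"
        by (rule IH[OF sv lv 1(2)])
      show ?thesis using Vsub.perp[OF A[THEN conjunct1] B[THEN conjunct1] A[THEN conjunct2] B[THEN conjunct2]]
        by (simp add: fmul_mon Mul)
    next
      case 2
      have B: "cls Ids X (mon v) \<in> Vsub Ids X \<and> (mon v :: _ \<Rightarrow> 'k) \<in> cls Ids X (mon v)"
        by (rule IH[OF sv lv 2(2)])
      show ?thesis using Vsub.vdash[OF Du[THEN conjunct1] B[THEN conjunct1] Du[THEN conjunct2] B[THEN conjunct2]]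
        by (simp add: pdu[OF 2(1)] fmul_mon Mul)
    next
      case 3
      have A: "cls Ids X (mon u) \<in> Vsub Ids X \<and> (mon u :: _ \<Rightarrow> 'k) \<in> cls Ids X (mon u)"
        by (rule IH[OF su lu 3(2)])
      show ?thesis using Vsub.dashv[OF A[THEN conjunct1] Dv[THEN conjunct1] A[THEN conjunct2] Dv[THEN conjunct2]]
        by (simp add: pdv[OF 3(1)] fmul_mon Mul)
    qed
  qed
qed


lemma W_V:
  fixes Ids :: "(nat mag \<Rightarrow> 'k::field) set" and X :: "'x set"
  assumes "finite S"
  shows "\<forall>f. supp f = S \<longrightarrow> Wf X f \<longrightarrow> cls Ids X f \<in> Vsub Ids X"
  using assms
proof (induction S rule: finite_induct)
  case empty
  show ?case
  proof (intro allI impI)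
    fix f :: "('x + 'x) mag \<Rightarrow> 'k"
    assume "supp f = {}"
    then have "f = fzero" by (auto simp: supp_def fzero_def)
    then show "cls Ids X f \<in> Vsub Ids X" by (simp add: Vsub.zero)
  qed
next
  case (insert w S)
  show ?case
  proof (intro allI impI)
    fix f :: "('x + 'x) mag \<Rightarrow> 'k"
    assume sf: "supp f = insert w S" and wf: "Wf X f"
    define f' where "f' = f(w := 0)"
    have sf': "supp f' = S" using sf insert.hyps(2) by (auto simp: supp_def f'_def)
    have wS: "w \<in> supp f" using sf by simp
    have lw: "letters w \<subseteq> alph X" and dw: "0 < degdot w"
      using wf wS by (auto simp: Wf_def FA_def)
    have wf': "Wf X f'" using wf sf sf' insert.hyps(1) by (auto simp: Wf_def FA_def)
    have f'V: "cls Ids X f' \<in> Vsub Ids X" using insert.IH sf' wf' by blast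
    have f'm: "f' \<in> cls Ids X f'" by (rule cls_refl) (use wf' in \<open>simp add: Wf_def\<close>)
    have monV: "cls Ids X (mon w) \<in> Vsub Ids X" by (rule mon_V[OF lw dw])
    have monm: "(mon w :: _ \<Rightarrow> 'k) \<in> cls Ids X (mon w)" by (rule cls_refl[OF mon_FA[OF lw]])
    have smV: "cls Ids X (fsmul (f w) (mon w)) \<in> Vsub Ids X" by (rule Vsub.smul[OF monV monm])
    have smFA: "fsmul (f w) (mon w :: _ \<Rightarrow> 'k) \<in> FA (alph X)"
    proof -
      have "supp (fsmul (f w) (mon w :: _ \<Rightarrow> 'k)) \<subseteq> {w}"
        by (auto simp: supp_def fsmul_def mon_def split: if_splits)
      then show ?thesis using lw unfolding FA_def by (auto dest: finite_subset)
    qed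
    have smm: "fsmul (f w) (mon w) \<in> cls Ids X (fsmul (f w) (mon w))" by (rule cls_refl[OF smFA])
    have eq: "fadd (fsmul (f w) (mon w)) f' = f"
      by (rule ext) (simp add: fadd_def fsmul_def mon_def f'_def)
    show "cls Ids X f \<in> Vsub Ids X"
      using Vsub.add[OF smV f'V smm f'm] unfolding eq .
  qed
qed

theorem lemma3p2:
  fixes Ids :: "(nat mag \<Rightarrow> 'k::field) set" and X :: "'x set"
  assumes "\<forall>p\<in>Ids. polylinear p"
  shows "Vsub Ids X = Wsub Ids X"
proof
  show "Vsub Ids X \<subseteq> Wsub Ids X"
  proof
    fix C assume "C \<in> Vsub Ids X"
    then obtain h where "Wf X h" "C = cls Ids X h" using V_W by blast
    then show "C \<in> Wsub Ids X" unfolding Wsub_def Wf_def by blast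
  qed
next
  show "Wsub Ids X \<subseteq> Vsub Ids X"
  proof
    fix C assume "C \<in> Wsub Ids X"
    then obtain f where f: "f \<in> FA (alph X)" "\<forall>w\<in>supp f. 0 < degdot w" "C = cls Ids X f"
      unfolding Wsub_def by blast
    have "finite (supp f)" using f(1) by (simp add: FA_def)
    from W_V[OF this] f show "C \<in> Vsub Ids X" unfolding Wf_def by blast
  qed
qed

end
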